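(* Let $\otimes$ and $\oplus$ be uninorms on $[0,1]$ and let $\neg$ be a strong negation function. Then $(\otimes,\oplus)$ satisfies the rearrangement inequality if and only if $(\Phi^{\neg}(\oplus),\Phi^{\neg}(\otimes))$ satisfies the dual rearrangement inequality.
   Context: A uninorm is a function $\otimes:[0,1]^2\to[0,1]$ that is commutative, associative, monotonic (for all $x,y,z\in[0,1]$, $x\leq y$ implies $x\otimes z\leq y\otimes z$), and has an identity element $e\in[0,1]$ ($x\otimes e=x$ for all $x$). A negation is a monotonically nonincreasing function $\neg:[0,1]\to[0,1]$ with $\neg(0)=1$, $\neg(1)=0$; it is strong if it is strictly monotone and involutive ($\neg\neg x=x$ for all $x$). For a function $f:[0,1]^2\to[0,1]$, its dual is $\Phi^{\neg}(f)(x,y)=\neg(f(\neg x,\neg y))$. For uninorms $\otimes,\oplus$, the pair $(\otimes,\oplus)$ satisfies the rearrangement inequality if for every $n\geq1$, all $0\leq x_1\leq\cdots\leq x_n\leq 1$, $0\leq y_1\leq\cdots\leq y_n\leq 1$ and every permutation $\sigma$ of $\{1,\dots,n\}$, $$(x_n\otimes y_1)\oplus\cdots\oplus(x_1\otimes y_n)\leq (x_{\sigma(1)}\otimes y_1)\oplus\cdots\oplus(x_{\sigma(n)}\otimes y_n)\leq (x_1\otimes y_1)\oplus\cdots\oplus(x_n\otimes y_n),$$ and satisfies the dual rearrangement inequality if for all such data $$(x_n\oplus y_1)\otimes\cdots\otimes(x_1\oplus y_n)\geq (x_{\sigma(1)}\oplus y_1)\otimes\cdots\otimes(x_{\sigma(n)}\oplus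 y_n)\geq (x_1\oplus y_1)\otimes\cdots\otimes(x_n\oplus y_n).$$ (For a pair $(\otimes,\oplus)$ the first component plays the role of $\otimes$ and the second the role of $\oplus$ in these definitions.) *)

theory Defs
  imports "HOL-Analysis.Analysis" "HOL-Combinatorics.Permutations"
begin

definition uninorm :: "(real \<Rightarrow> real \<Rightarrow> real) \<Rightarrow> bool" where
  "uninorm f \<longleftrightarrow>
     (\<forall>x\<in>{0..1}. \<forall>y\<in>{0..1}. f x y \<in> {0..1}) \<and>
     (\<forall>x\<in>{0..1}. \<forall>y\<in>{0..1}. f x y = f y x) \<and>
     (\<forall>x\<in>{0..1}. \<forall>y\<in>{0..1}. \<forall>z\<in>{0..1}. f (f x y) z = f x (f y z)) \<and>
     (\<forall>x\<in>{0..1}. \<forall>y\<in>{0..1}. \<forall>z\<in>{0..1}. x \<le> y \<longrightarrow> f x z \<le> f y z) \<and>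
     (\<exists>e\<in>{0..1}. \<forall>x\<in>{0..1}. f x e = x)"

definition negation :: "(real \<Rightarrow> real) \<Rightarrow> bool" where
  "negation n \<longleftrightarrow> (\<forall>x\<in>{0..1}. n x \<in> {0..1}) \<and>
     (\<forall>x\<in>{0..1}. \<forall>y\<in>{0..1}. x \<le> y \<longrightarrow> n y \<le> n x) \<and> n 0 = 1 \<and> n 1 = 0"

definition strong_negation :: "(real \<Rightarrow> real) \<Rightarrow> bool" where
  "strong_negation n \<longleftrightarrow> negation n \<and>
     (\<forall>x\<in>{0..1}. \<forall>y\<in>{0..1}. x < y \<longrightarrow> n y < n x) \<and>
     (\<forall>x\<in>{0..1}. n (n x) = x)"

definition dual :: "(real \<Rightarrow> real) \<Rightarrow> (real \<Rightarrow> real \<Rightarrow> real) \<Rightarrow> (real \<Rightarrow> real \<Rightarrow> real)" where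
  "dual n f = (\<lambda>x y. n (f (n x) (n y)))"

text \<open>iter f z n = z 0 (f) z 1 (f) ... (f) z (n-1), left-associated; meant for n \<ge> 1.\<close>
fun iter :: "(real \<Rightarrow> real \<Rightarrow> real) \<Rightarrow> (nat \<Rightarrow> real) \<Rightarrow> nat \<Rightarrow> real" where
  "iter f z 0 = z 0"
| "iter f z (Suc 0) = z 0"
| "iter f z (Suc (Suc k)) = f (iter f z (Suc k)) (z (Suc k))"

text \<open>Sequences are indexed 0..n-1 (instead of 1..n); sorted means nondecreasing in [0,1].\<close>
definition sorted01 :: "nat \<Rightarrow> (nat \<Rightarrow> real) \<Rightarrow> bool" where
  "sorted01 n x \<longleftrightarrow> (\<forall>i<n. 0 \<le> x i \<and> x i \<le> 1) \<and> (\<forall>i j. i \<le> j \<and> j < n \<longrightarrow> x i \<le> x j)"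

definition rearrangement_ineq :: "(real \<Rightarrow> real \<Rightarrow> real) \<Rightarrow> (real \<Rightarrow> real \<Rightarrow> real) \<Rightarrow> bool" where
  "rearrangement_ineq T S \<longleftrightarrow>
     (\<forall>n\<ge>1. \<forall>x y \<sigma>. sorted01 n x \<and> sorted01 n y \<and> \<sigma> permutes {..<n} \<longrightarrow>
        iter S (\<lambda>i. T (x (n - 1 - i)) (y i)) n \<le> iter S (\<lambda>i. T (x (\<sigma> i)) (y i)) n \<and>
        iter S (\<lambda>i. T (x (\<sigma> i)) (y i)) n \<le> iter S (\<lambda>i. T (x i) (y i)) n)"

definition dual_rearrangement_ineq :: "(real \<Rightarrow> real \<Rightarrow> real) \<Rightarrow> (real \<Rightarrow> real \<Rightarrow> real) \<Rightarrow> bool" where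
  "dual_rearrangement_ineq T S \<longleftrightarrow>
     (\<forall>n\<ge>1. \<forall>x y \<sigma>. sorted01 n x \<and> sorted01 n y \<and> \<sigma> permutes {..<n} \<longrightarrow>
        iter T (\<lambda>i. S (x (n - 1 - i)) (y i)) n \<ge> iter T (\<lambda>i. S (x (\<sigma> i)) (y i)) n \<and>
        iter T (\<lambda>i. S (x (\<sigma> i)) (y i)) n \<ge> iter T (\<lambda>i. S (x i) (y i)) n)"

end

theory Submission
  imports Defs
begin

lemma iter_cong: "(\<forall>i<Suc k. z i = w i) \<Longrightarrow> iter S z (Suc k) = iter S w (Suc k)"
  by (induction k) auto

context
  fixes S :: "real \<Rightarrow> real \<Rightarrow> real"
  assumes cl: "\<And>x y. x \<in> {0..1} \<Longrightarrow> y \<in> {0..1} \<Longrightarrow> S x y \<in> {0..1}"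
    and cm: "\<And>x y. x \<in> {0..1} \<Longrightarrow> y \<in> {0..1} \<Longrightarrow> S x y = S y x"
    and as: "\<And>x y z. x \<in> {0..1} \<Longrightarrow> y \<in> {0..1} \<Longrightarrow> z \<in> {0..1} \<Longrightarrow> S (S x y) z = S x (S y z)"
begin

lemma iter_closed: "(\<forall>i<Suc k. z i \<in> {0..1}) \<Longrightarrow> iter S z (Suc k) \<in> {0..1}"
proof (induction k)
  case 0 then show ?case by auto
next
  case (Suc k) then show ?case by (simp add: cl del: atLeastAtMost_iff)
qed

lemma iter_cons: "(\<forall>i<Suc (Suc k). z i \<in> {0..1}) \<Longrightarrow>
   iter S z (Suc (Suc k)) = S (z 0) (iter S (z \<circ> Suc) (Suc k))"
proof (induction k)
  case 0 then show ?case by auto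
next
  case (Suc k)
  have c1: "iter S (z \<circ> Suc) (Suc k) \<in> {0..1}"
    by (rule iter_closed) (use Suc.prems in auto)
  have "iter S z (Suc (Suc (Suc k))) = S (iter S z (Suc (Suc k))) (z (Suc (Suc k)))" by simp
  also have "\<dots> = S (S (z 0) (iter S (z \<circ> Suc) (Suc k))) (z (Suc (Suc k)))"
    using Suc.IH Suc.prems by (simp add: comp_def)
  also have "\<dots> = S (z 0) (S (iter S (z \<circ> Suc) (Suc k)) (z (Suc (Suc k))))"
    by (rule as) (use Suc.prems c1 in auto)
  also have "\<dots> = S (z 0) (iter S (z \<circ> Suc) (Suc (Suc k)))" by simp
  finally show ?case .
qed

lemma iter_rev: "(\<forall>i<Suc k. z i \<in> {0..1}) \<Longrightarrow>
   iter S (\<lambda>i. z (Suc k - 1 - i)) (Suc k) = iter S z (Suc k)"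
proof (induction k arbitrary: z)
  case 0 then show ?case by auto
next
  case (Suc k)
  have "iter S (\<lambda>i. z (Suc (Suc k) - 1 - i)) (Suc (Suc k))
      = S (iter S (\<lambda>i. z (Suc (Suc k) - 1 - i)) (Suc k)) (z 0)" by simp
  also have "iter S (\<lambda>i. z (Suc (Suc k) - 1 - i)) (Suc k)
      = iter S (\<lambda>i. (z \<circ> Suc) (Suc k - 1 - i)) (Suc k)"
    by (rule iter_cong) (auto simp: Suc_diff_le)
  also have "\<dots> = iter S (z \<circ> Suc) (Suc k)"
    by (rule Suc.IH) (use Suc.prems in auto)
  also have "S (iter S (z \<circ> Suc) (Suc k)) (z 0) = S (z 0) (iter S (z \<circ> Suc) (Suc k))"
    by (rule cm) (use Suc.prems iter_closed[of k "z \<circ> Suc"] in auto)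
  also have "\<dots> = iter S z (Suc (Suc k))"
    by (rule iter_cons[symmetric]) (use Suc.prems in auto)
  finally show ?case .
qed

end


lemma rev_perm:
  fixes \<sigma> :: "nat \<Rightarrow> nat"
  assumes "\<sigma> permutes {..<m}"
  shows "(\<lambda>i. if i < m then m - 1 - \<sigma> (m - 1 - i) else i) permutes {..<m}"
proof -
  let ?t = "\<lambda>i. if i < m then m - 1 - \<sigma> (m - 1 - i) else i"
  have lt: "\<And>j. j < m \<Longrightarrow> \<sigma> j < m" using assms permutes_in_image by fastforce
  have inj: "inj_on ?t {..<m}"
  proof (rule inj_onI)
    fix a b assume a: "a \<in> {..<m}" and b: "b \<in> {..<m}" and e: "?t a = ?t b"
    have l1: "\<sigma> (m - 1 - a) < m" using a by (intro lt) auto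
    have l2: "\<sigma> (m - 1 - b) < m" using b by (intro lt) auto
    have "m - 1 - \<sigma> (m - 1 - a) = m - 1 - \<sigma> (m - 1 - b)" using e a b by simp
    then have "\<sigma> (m - 1 - a) = \<sigma> (m - 1 - b)" using l1 l2 by linarith
    then have "m - 1 - a = m - 1 - b" using permutes_inj[OF assms] by (meson injD)
    then show "a = b" using a b by auto
  qed
  have sub: "?t ` {..<m} \<subseteq> {..<m}" by auto
  have "?t ` {..<m} = {..<m}" using endo_inj_surj[OF _ sub inj] by simp
  then have "bij_betw ?t {..<m} {..<m}" using inj by (simp add: bij_betw_def)
  then show ?thesis by (rule bij_imp_permutes) auto
qed

context
  fixes S T :: "real \<Rightarrow> real \<Rightarrow> real" and N :: "real \<Rightarrow> real"
  assumes uS: "uninorm S" and uT: "uninorm T" and sN: "strong_negation N"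
begin

lemma clS: "x \<in> {0..1} \<Longrightarrow> y \<in> {0..1} \<Longrightarrow> S x y \<in> {0..1}"
  using uS unfolding uninorm_def by blast
lemma cmS: "x \<in> {0..1} \<Longrightarrow> y \<in> {0..1} \<Longrightarrow> S x y = S y x"
  using uS unfolding uninorm_def by blast
lemma asS: "x \<in> {0..1} \<Longrightarrow> y \<in> {0..1} \<Longrightarrow> z \<in> {0..1} \<Longrightarrow> S (S x y) z = S x (S y z)"
  using uS unfolding uninorm_def by blast
lemma clT: "x \<in> {0..1} \<Longrightarrow> y \<in> {0..1} \<Longrightarrow> T x y \<in> {0..1}"
  using uT unfolding uninorm_def by blast
lemma Nr: "x \<in> {0..1} \<Longrightarrow> N x \<in> {0..1}"
  using sN unfolding strong_negation_def negation_def by blast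
lemma Nmono: "x \<in> {0..1} \<Longrightarrow> y \<in> {0..1} \<Longrightarrow> x \<le> y \<Longrightarrow> N y \<le> N x"
  using sN unfolding strong_negation_def negation_def by blast
lemma Nstrict: "x \<in> {0..1} \<Longrightarrow> y \<in> {0..1} \<Longrightarrow> x < y \<Longrightarrow> N y < N x"
  using sN unfolding strong_negation_def by blast
lemma Ninv: "x \<in> {0..1} \<Longrightarrow> N (N x) = x"
  using sN unfolding strong_negation_def by blast

lemma N_le_iff: "a \<in> {0..1} \<Longrightarrow> b \<in> {0..1} \<Longrightarrow> N b \<le> N a \<longleftrightarrow> a \<le> b"
  using Nmono Nstrict by (meson linorder_not_le)

lemmas Sfacts = iter_closed[of S, OF clS cmS asS] iter_rev[of S, OF clS cmS asS]

lemma iter_dual: "(\<forall>i<Suc k. z i \<in> {0..1}) \<Longrightarrow>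
    iter (dual N S) z (Suc k) = N (iter S (N \<circ> z) (Suc k))"
proof (induction k)
  case 0 then show ?case using Ninv by auto
next
  case (Suc k)
  have c: "iter S (N \<circ> z) (Suc k) \<in> {0..1}"
    by (rule iter_closed[of S, OF clS cmS asS]) (use Suc.prems Nr in auto)
  show ?case using Suc c Ninv by (simp add: dual_def comp_def)
qed

lemma key:
  assumes x: "\<forall>i<Suc k. x i \<in> {0..1}" and y: "\<forall>i<Suc k. y i \<in> {0..1}"
    and p: "\<forall>i<Suc k. p i < Suc k"
  shows "iter (dual N S) (\<lambda>i. dual N T (x (p i)) (y i)) (Suc k)
     = N (iter S (\<lambda>i. T (N (x (Suc k - 1 - (Suc k - 1 - p (Suc k - 1 - i)))))
                             (N (y (Suc k - 1 - i)))) (Suc k))"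
proof -
  let ?m = "Suc k"
  let ?z = "\<lambda>i. T (N (x (?m - 1 - (?m - 1 - p (?m - 1 - i))))) (N (y (?m - 1 - i)))"
  have "iter (dual N S) (\<lambda>i. dual N T (x (p i)) (y i)) ?m
      = N (iter S (N \<circ> (\<lambda>i. dual N T (x (p i)) (y i))) ?m)"
    by (rule iter_dual) (use x y p Nr clT in \<open>auto simp: dual_def\<close>)
  also have "iter S (N \<circ> (\<lambda>i. dual N T (x (p i)) (y i))) ?m = iter S (\<lambda>i. ?z (?m - 1 - i)) ?m"
  proof (rule iter_cong, intro allI impI)
    fix i assume i: "i < ?m"
    have "?m - 1 - (?m - 1 - p (?m - 1 - (?m - 1 - i))) = p i" using i p by auto
    moreover have "?m - 1 - (?m - 1 - i) = i" using i by auto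
    ultimately show "(N \<circ> (\<lambda>i. dual N T (x (p i)) (y i))) i = ?z (?m - 1 - i)"
      using x y p i Nr clT Ninv by (simp add: dual_def)
  qed
  also have "\<dots> = iter S ?z ?m"
    by (rule iter_rev[of S, OF clS cmS asS]) (use x y p Nr clT in auto)
  finally show ?thesis .
qed


lemma c1:
  assumes x: "\<forall>i<Suc k. x i \<in> {0..1}" and y: "\<forall>i<Suc k. y i \<in> {0..1}"
  shows "iter (dual N S) (\<lambda>i. dual N T (x (Suc k - 1 - i)) (y i)) (Suc k)
     = N (iter S (\<lambda>i. T (N (x (Suc k - 1 - (Suc k - 1 - i)))) (N (y (Suc k - 1 - i)))) (Suc k))"
proof -
  have rng: "\<forall>i<Suc k. Suc k - 1 - i < Suc k" by auto
  show ?thesis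
    apply (subst key[OF x y rng])
    apply (rule arg_cong[where f=N])
    apply (rule iter_cong)
    apply auto
    done
qed

lemma c3:
  assumes x: "\<forall>i<Suc k. x i \<in> {0..1}" and y: "\<forall>i<Suc k. y i \<in> {0..1}"
  shows "iter (dual N S) (\<lambda>i. dual N T (x i) (y i)) (Suc k)
     = N (iter S (\<lambda>i. T (N (x (Suc k - 1 - i))) (N (y (Suc k - 1 - i)))) (Suc k))"
  using key[OF x y, of id] by simp

lemma c2:
  assumes x: "\<forall>i<Suc k. x i \<in> {0..1}" and y: "\<forall>i<Suc k. y i \<in> {0..1}"
    and p: "\<forall>i<Suc k. p i < Suc k"
  shows "iter (dual N S) (\<lambda>i. dual N T (x (p i)) (y i)) (Suc k)
     = N (iter S (\<lambda>i. T (N (x (Suc k - 1 - (if i < Suc k then Suc k - 1 - p (Suc k - 1 - i) else i))))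
            (N (y (Suc k - 1 - i)))) (Suc k))"
  apply (subst key[OF x y p])
  apply (rule arg_cong[where f=N])
  apply (rule iter_cong)
  apply auto
  done

lemma sorted_rev: "sorted01 n x \<Longrightarrow> sorted01 n (\<lambda>i. N (x (n - 1 - i)))"
  unfolding sorted01_def
proof (intro conjI allI impI)
  fix i assume H: "(\<forall>i<n. 0 \<le> x i \<and> x i \<le> 1) \<and> (\<forall>i j. i \<le> j \<and> j < n \<longrightarrow> x i \<le> x j)"
  { assume "i < n" then show "0 \<le> N (x (n - 1 - i))" "N (x (n - 1 - i)) \<le> 1"
      using H Nr[of "x (n - 1 - i)"] by auto }
  fix j assume ij: "i \<le> j \<and> j < n"
  then show "N (x (n - 1 - i)) \<le> N (x (n - 1 - j))"
    using H by (intro Nmono) auto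
qed

lemma main: "rearrangement_ineq T S \<longleftrightarrow> dual_rearrangement_ineq (dual N S) (dual N T)"
proof
  assume R: "rearrangement_ineq T S"
  show "dual_rearrangement_ineq (dual N S) (dual N T)" unfolding dual_rearrangement_ineq_def
  proof (intro allI impI)
    fix n x y and \<sigma> :: "nat \<Rightarrow> nat"
    assume n: "n \<ge> 1" and H: "sorted01 n x \<and> sorted01 n y \<and> \<sigma> permutes {..<n}"
    obtain k where k: "n = Suc k" using n by (cases n) auto
    define u where "u = (\<lambda>i. N (x (n - 1 - i)))"
    define v where "v = (\<lambda>i. N (y (n - 1 - i)))"
    define \<tau> where "\<tau> = (\<lambda>i. if i < n then n - 1 - \<sigma> (n - 1 - i) else i)"
    have xr: "\<forall>i<Suc k. x i \<in> {0..1}" and yr: "\<forall>i<Suc k. y i \<in> {0..1}"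
      using H k unfolding sorted01_def by auto
    have sr: "\<forall>i<Suc k. \<sigma> i < Suc k" using H k permutes_in_image by fastforce
    have su: "sorted01 n u" unfolding u_def using H sorted_rev by blast
    have sv: "sorted01 n v" unfolding v_def using H sorted_rev by blast
    have tp: "\<tau> permutes {..<n}" unfolding \<tau>_def using H rev_perm by blast
    have tr: "\<forall>i<Suc k. \<tau> i < Suc k" using tp k permutes_in_image by fastforce
    have ur: "\<forall>i<Suc k. u i \<in> {0..1}" and vr: "\<forall>i<Suc k. v i \<in> {0..1}"
      using su sv k unfolding sorted01_def by auto
    let ?P1 = "iter S (\<lambda>i. T (u (n - 1 - i)) (v i)) n"
    let ?P2 = "iter S (\<lambda>i. T (u (\<tau> i)) (v i)) n"
    let ?P3 = "iter S (\<lambda>i. T (u i) (v i)) n"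
    have ineq: "?P1 \<le> ?P2 \<and> ?P2 \<le> ?P3" using R su sv tp n unfolding rearrangement_ineq_def by blast
    have r1: "?P1 \<in> {0..1}" unfolding k
      by (rule iter_closed[of S, OF clS cmS asS]) (use ur vr clT in auto)
    have r2: "?P2 \<in> {0..1}" unfolding k
      by (rule iter_closed[of S, OF clS cmS asS]) (use ur vr tr clT in auto)
    have r3: "?P3 \<in> {0..1}" unfolding k
      by (rule iter_closed[of S, OF clS cmS asS]) (use ur vr clT in auto)
    have e1: "iter (dual N S) (\<lambda>i. dual N T (x (n - 1 - i)) (y i)) n = N ?P1"
      unfolding k u_def v_def using c1[OF xr yr] by simp
    have e2: "iter (dual N S) (\<lambda>i. dual N T (x (\<sigma> i)) (y i)) n = N ?P2"
      unfolding k u_def v_def \<tau>_def using c2[OF xr yr sr] by simp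
    have e3: "iter (dual N S) (\<lambda>i. dual N T (x i) (y i)) n = N ?P3"
      unfolding k u_def v_def using c3[OF xr yr] by simp
    show "iter (dual N S) (\<lambda>i. dual N T (x (\<sigma> i)) (y i)) n
           \<le> iter (dual N S) (\<lambda>i. dual N T (x (n - 1 - i)) (y i)) n \<and>
          iter (dual N S) (\<lambda>i. dual N T (x i) (y i)) n
           \<le> iter (dual N S) (\<lambda>i. dual N T (x (\<sigma> i)) (y i)) n"
      unfolding e1 e2 e3 using ineq r1 r2 r3 N_le_iff by blast
  qed
next
  assume D: "dual_rearrangement_ineq (dual N S) (dual N T)"
  show "rearrangement_ineq T S" unfolding rearrangement_ineq_def
  proof (intro allI impI)
    fix n x y and \<sigma> :: "nat \<Rightarrow> nat"
    assume n: "n \<ge> 1" and H: "sorted01 n x \<and> sorted01 n y \<and> \<sigma> permutes {..<n}"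
    obtain k where k: "n = Suc k" using n by (cases n) auto
    define u where "u = (\<lambda>i. N (x (n - 1 - i)))"
    define v where "v = (\<lambda>i. N (y (n - 1 - i)))"
    define \<tau> where "\<tau> = (\<lambda>i. if i < n then n - 1 - \<sigma> (n - 1 - i) else i)"
    have xr: "\<forall>i<Suc k. x i \<in> {0..1}" and yr: "\<forall>i<Suc k. y i \<in> {0..1}"
      using H k unfolding sorted01_def by auto
    have sr: "\<forall>i<Suc k. \<sigma> i < Suc k" using H k permutes_in_image by fastforce
    have su: "sorted01 n u" unfolding u_def using H sorted_rev by blast
    have sv: "sorted01 n v" unfolding v_def using H sorted_rev by blast
    have tp: "\<tau> permutes {..<n}" unfolding \<tau>_def using H rev_perm by blast
    have tr: "\<forall>i<Suc k. \<tau> i < Suc k" using tp k permutes_in_image by fastforce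
    have ur: "\<forall>i<Suc k. u i \<in> {0..1}" and vr: "\<forall>i<Suc k. v i \<in> {0..1}"
      using su sv k unfolding sorted01_def by auto
    have ineq: "iter (dual N S) (\<lambda>i. dual N T (u (\<tau> i)) (v i)) n
           \<le> iter (dual N S) (\<lambda>i. dual N T (u (n - 1 - i)) (v i)) n \<and>
          iter (dual N S) (\<lambda>i. dual N T (u i) (v i)) n
           \<le> iter (dual N S) (\<lambda>i. dual N T (u (\<tau> i)) (v i)) n"
      using D su sv tp n unfolding dual_rearrangement_ineq_def by blast
    let ?P1 = "iter S (\<lambda>i. T (x (n - 1 - i)) (y i)) n"
    let ?P2 = "iter S (\<lambda>i. T (x (\<sigma> i)) (y i)) n"
    let ?P3 = "iter S (\<lambda>i. T (x i) (y i)) n"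
    have r1: "?P1 \<in> {0..1}" unfolding k
      by (rule iter_closed[of S, OF clS cmS asS]) (use xr yr clT in auto)
    have r2: "?P2 \<in> {0..1}" unfolding k
      by (rule iter_closed[of S, OF clS cmS asS]) (use xr yr sr clT in auto)
    have r3: "?P3 \<in> {0..1}" unfolding k
      by (rule iter_closed[of S, OF clS cmS asS]) (use xr yr clT in auto)
    have e1: "iter (dual N S) (\<lambda>i. dual N T (u (n - 1 - i)) (v i)) n = N ?P1"
      unfolding k
    proof (subst c1[OF ur vr], rule arg_cong[where f=N], rule iter_cong, intro allI impI)
      fix i assume i: "i < Suc k"
      then show "T (N (u (Suc k - 1 - (Suc k - 1 - i)))) (N (v (Suc k - 1 - i))) =
                 T (x (Suc k - 1 - i)) (y i)"
        using xr yr Ninv k unfolding u_def v_def by (simp add: Suc_diff_le)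
    qed
    have e2: "iter (dual N S) (\<lambda>i. dual N T (u (\<tau> i)) (v i)) n = N ?P2"
      unfolding k
    proof (subst c2[OF ur vr tr], rule arg_cong[where f=N], rule iter_cong, intro allI impI)
      fix i assume i: "i < Suc k"
      have "\<tau> (Suc k - 1 - i) = Suc k - 1 - \<sigma> i" unfolding \<tau>_def k using i by auto
      then have "Suc k - 1 - (Suc k - 1 - \<tau> (Suc k - 1 - i)) = Suc k - 1 - \<sigma> i"
        using sr i by auto
      moreover have "Suc k - 1 - (Suc k - 1 - \<sigma> i) = \<sigma> i" using sr i by auto
      ultimately show "T (N (u (Suc k - 1 - (if i < Suc k then Suc k - 1 - \<tau> (Suc k - 1 - i) else i))))
            (N (v (Suc k - 1 - i))) = T (x (\<sigma> i)) (y i)"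
        using xr yr sr Ninv k i unfolding u_def v_def by (simp add: Suc_diff_le)
    qed
    have e3: "iter (dual N S) (\<lambda>i. dual N T (u i) (v i)) n = N ?P3"
      unfolding k
    proof (subst c3[OF ur vr], rule arg_cong[where f=N], rule iter_cong, intro allI impI)
      fix i assume i: "i < Suc k"
      then show "T (N (u (Suc k - 1 - i))) (N (v (Suc k - 1 - i))) = T (x i) (y i)"
        using xr yr Ninv k unfolding u_def v_def by (simp add: Suc_diff_le)
    qed
    show "?P1 \<le> ?P2 \<and> ?P2 \<le> ?P3"
      using ineq unfolding e1 e2 e3 using r1 r2 r3 N_le_iff by blast
  qed
qed

end

theorem theorem3:
  fixes T S :: "real \<Rightarrow> real \<Rightarrow> real" and N :: "real \<Rightarrow> real"
  assumes "uninorm T" and "uninorm S" and "strong_negation N"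
  shows "rearrangement_ineq T S \<longleftrightarrow> dual_rearrangement_ineq (dual N S) (dual N T)"
  using main[OF assms(2) assms(1) assms(3)] .

end
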